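(* Let $f:\mathcal{S}\to\mathbb{R}$ be continuously differentiable with $f^{\inf}:=\inf_{X\in\mathcal{S}}f(X)>-\infty$, and suppose $f$ is layer-wise $(L^0,L^1)$-smooth with constants $L^0=(L^0_1,\dots,L^0_p)\in\mathbb{R}^p_+$ and $L^1=(L^1_1,\dots,L^1_p)$ with $L^1_i>0$ for all $i$. Fix $\varepsilon>0$ and let $X^0,X^1,\dots$ be the iterates of deterministic Gluon run from $X^0$ with radii $$t_i^k=\frac{\|\nabla_i f(X^k)\|_{(i)\star}}{L^0_i+L^1_i\|\nabla_i f(X^k)\|_{(i)\star}}$$ (with $t_i^k:=0$, i.e. $X_i^{k+1}=X_i^k$, whenever $\nabla_i f(X^k)=0$). Let $\Delta^0:=f(X^0)-f^{\inf}$, $H:=\frac1p\sum_{j=1}^p \frac{1}{L^1_j}$, and $$K:=\left\lceil \frac{2\Delta^0\sum_{i=1}^p \frac{L^0_i}{(L^1_i)^2}}{\varepsilon^2 H^2}+\frac{2\Delta^0}{\varepsilon H}\right\rceil .$$ Then, provided $K\ge 1$, $$\min_{k=0,\dots,K-1}\ \sum_{i=1}^p \frac{1/L^1_i}{H}\,\|\nabla_i f(X^k)\|_{(i)\star}\le\varepsilon .$$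
   Context: $\mathcal{S}=\mathcal{S}_1\times\cdots\times\mathcal{S}_p$ with $\mathcal{S}_i=\mathbb{R}^{m_i\times n_i}$; an element is written $X=[X_1,\dots,X_p]$. Each $\mathcal{S}_i$ carries the trace inner product $\langle X_i,Y_i\rangle_{(i)}=\operatorname{tr}(X_i^\top Y_i)$ and an arbitrary norm $\|\cdot\|_{(i)}$ with dual norm $\|Y_i\|_{(i)\star}=\sup_{\|Z_i\|_{(i)}\le 1}\langle Y_i,Z_i\rangle_{(i)}$. $\nabla_i f(X)\in\mathcal{S}_i$ denotes the block of the gradient of $f$ corresponding to $X_i$ (w.r.t. the sum of trace inner products). Layer-wise $(L^0,L^1)$-smoothness: for all $i$ and all $X,Y\in\mathcal{S}$, $\|\nabla_i f(X)-\nabla_i f(Y)\|_{(i)\star}\le (L^0_i+L^1_i\|\nabla_i f(X)\|_{(i)\star})\|X_i-Y_i\|_{(i)}$. Deterministic Gluon: for $k=0,1,\dots$ and each $i=1,\dots,p$, given radius $t_i^k\ge0$, set $X_i^{k+1}\in\arg\min\{\langle \nabla_i f(X^k),X_i\rangle_{(i)}: X_i\in\mathcal{S}_i,\ \|X_i-X_i^k\|_{(i)}\le t_i^k\}$ (any minimizer), and $X^{k+1}=[X_1^{k+1},\dots,X_p^{k+1}]$. *)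

theory Defs
  imports "HOL-Analysis.Analysis"
begin

text \<open>The product space S = S_1 x ... x S_p of matrix spaces, with the sum of the
trace (Frobenius) inner products, is modelled as the Euclidean space real^'c whose
(finitely many) coordinates 'c are the matrix entries of all blocks; the map
blk assigns to each coordinate the index (in 0..<p) of the block it belongs to.
Block i (the space S_i) is the subspace of vectors supported on blk^-1 {i}.\<close>

definition in_block :: "('c \<Rightarrow> nat) \<Rightarrow> nat \<Rightarrow> real^'c \<Rightarrow> bool" where
  "in_block blk i Z \<longleftrightarrow> (\<forall>c. blk c \<noteq> i \<longrightarrow> Z $ c = 0)"

definition block_proj :: "('c \<Rightarrow> nat) \<Rightarrow> nat \<Rightarrow> real^'c \<Rightarrow> real^'c" where
  "block_proj blk i X = (\<chi> c. if blk c = i then X $ c else 0)"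

definition is_block_norm :: "('c \<Rightarrow> nat) \<Rightarrow> nat \<Rightarrow> (real^'c \<Rightarrow> real) \<Rightarrow> bool" where
  "is_block_norm blk i N \<longleftrightarrow>
     (\<forall>Z. in_block blk i Z \<longrightarrow> 0 \<le> N Z \<and> (N Z = 0 \<longleftrightarrow> Z = 0)) \<and>
     (\<forall>a Z. in_block blk i Z \<longrightarrow> N (a *\<^sub>R Z) = \<bar>a\<bar> * N Z) \<and>
     (\<forall>Z W. in_block blk i Z \<longrightarrow> in_block blk i W \<longrightarrow> N (Z + W) \<le> N Z + N W)"

definition dual_norm :: "('c \<Rightarrow> nat) \<Rightarrow> nat \<Rightarrow> (real^'c \<Rightarrow> real) \<Rightarrow> real^'c \<Rightarrow> real" where
  "dual_norm blk i N Y = Sup {Y \<bullet> Z | Z. in_block blk i Z \<and> N Z \<le> 1}"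

definition layerwise_L0L1_smooth ::
  "nat \<Rightarrow> ('c \<Rightarrow> nat) \<Rightarrow> (nat \<Rightarrow> real^'c \<Rightarrow> real) \<Rightarrow> (real^'c \<Rightarrow> real^'c)
    \<Rightarrow> (nat \<Rightarrow> real) \<Rightarrow> (nat \<Rightarrow> real) \<Rightarrow> bool" where
  "layerwise_L0L1_smooth p blk N G L0 L1 \<longleftrightarrow>
     (\<forall>i<p. \<forall>X Y.
        dual_norm blk i (N i) (block_proj blk i (G X) - block_proj blk i (G Y))
        \<le> (L0 i + L1 i * dual_norm blk i (N i) (block_proj blk i (G X)))
            * N i (block_proj blk i X - block_proj blk i Y))"

text \<open>Deterministic Gluon: for every k and block i, the new block X_i^{k+1} is a minimizer
of the linear function <grad_i f(X^k), .> over the ball of radius t i k around X_i^k in S_i.\<close>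
definition gluon_iterates ::
  "nat \<Rightarrow> ('c \<Rightarrow> nat) \<Rightarrow> (nat \<Rightarrow> real^'c \<Rightarrow> real) \<Rightarrow> (real^'c \<Rightarrow> real^'c)
    \<Rightarrow> (nat \<Rightarrow> nat \<Rightarrow> real) \<Rightarrow> (nat \<Rightarrow> real^'c) \<Rightarrow> bool" where
  "gluon_iterates p blk N G t Xs \<longleftrightarrow>
     (\<forall>k. \<forall>i<p.
        N i (block_proj blk i (Xs (Suc k)) - block_proj blk i (Xs k)) \<le> t i k \<and>
        (\<forall>Z. in_block blk i Z \<longrightarrow> N i (Z - block_proj blk i (Xs k)) \<le> t i k \<longrightarrow>
             block_proj blk i (G (Xs k)) \<bullet> block_proj blk i (Xs (Suc k))
             \<le> block_proj blk i (G (Xs k)) \<bullet> Z))"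

end

theory Submission
  imports Defs
begin


lemma bp_diff: "block_proj blk i (X - Y) = block_proj blk i X - block_proj blk i Y"
  by (simp add: block_proj_def vec_eq_iff)
lemma bp_add: "block_proj blk i (X + Y) = block_proj blk i X + block_proj blk i Y"
  by (simp add: block_proj_def vec_eq_iff)
lemma bp_scale: "block_proj blk i (a *\<^sub>R X) = a *\<^sub>R block_proj blk i X"
  by (simp add: block_proj_def vec_eq_iff)
lemma bp_sum: "block_proj blk i (sum F A) = (\<Sum>a\<in>A. block_proj blk i (F a))"
  by (induction A rule: infinite_finite_induct) (auto simp: bp_add block_proj_def vec_eq_iff)
lemma bp_in: "in_block blk i (block_proj blk i X)"
  by (simp add: block_proj_def in_block_def)
lemma bp_id: "in_block blk i Z \<Longrightarrow> block_proj blk i Z = Z"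
  by (auto simp add: block_proj_def in_block_def vec_eq_iff)
lemma ib_add: "in_block blk i Z \<Longrightarrow> in_block blk i W \<Longrightarrow> in_block blk i (Z + W)"
  by (simp add: in_block_def)
lemma ib_diff: "in_block blk i Z \<Longrightarrow> in_block blk i W \<Longrightarrow> in_block blk i (Z - W)"
  by (simp add: in_block_def)
lemma ib_scale: "in_block blk i Z \<Longrightarrow> in_block blk i (a *\<^sub>R Z)"
  by (simp add: in_block_def)
lemma ib_zero: "in_block blk i 0"
  by (simp add: in_block_def)

lemma inner_blocks:
  fixes w v :: "real^'c::finite"
  assumes "\<forall>c. blk c < p"
  shows "w \<bullet> v = (\<Sum>i<p. block_proj blk i w \<bullet> block_proj blk i v)"
proof -
  have "(\<Sum>i<p. block_proj blk i w \<bullet> block_proj blk i v)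
      = (\<Sum>i<p. \<Sum>c\<in>UNIV. if blk c = i then w $ c * v $ c else 0)"
    by (simp add: inner_vec_def block_proj_def if_distrib cong: if_cong)
  also have "\<dots> = (\<Sum>c\<in>UNIV. \<Sum>i<p. if blk c = i then w $ c * v $ c else 0)"
    by (rule sum.swap)
  also have "\<dots> = (\<Sum>c\<in>UNIV. w $ c * v $ c)"
    using assms by (simp add: sum.delta' )
  finally show ?thesis by (simp add: inner_vec_def)
qed

lemma N_zero: "is_block_norm blk i N \<Longrightarrow> N 0 = 0"
  unfolding is_block_norm_def using ib_zero by blast
lemma N_nonneg: "is_block_norm blk i N \<Longrightarrow> in_block blk i Z \<Longrightarrow> 0 \<le> N Z"
  unfolding is_block_norm_def by blast
lemma N_scale: "is_block_norm blk i N \<Longrightarrow> in_block blk i Z \<Longrightarrow> N (a *\<^sub>R Z) = \<bar>a\<bar> * N Z"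
  unfolding is_block_norm_def by blast
lemma N_tri: "is_block_norm blk i N \<Longrightarrow> in_block blk i Z \<Longrightarrow> in_block blk i W \<Longrightarrow> N (Z + W) \<le> N Z + N W"
  unfolding is_block_norm_def by blast
lemma N_eq0: "is_block_norm blk i N \<Longrightarrow> in_block blk i Z \<Longrightarrow> N Z = 0 \<longleftrightarrow> Z = 0"
  unfolding is_block_norm_def by blast
lemma N_neg: "is_block_norm blk i N \<Longrightarrow> in_block blk i Z \<Longrightarrow> N (- Z) = N Z"
  using N_scale[of blk i N Z "-1"] by simp

lemma N_sum:
  assumes "is_block_norm blk i N" "finite A" "\<forall>a\<in>A. in_block blk i (F a)"
  shows "N (sum F A) \<le> (\<Sum>a\<in>A. N (F a)) \<and> in_block blk i (sum F A)"
  using assms(2,3)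
proof (induction A rule: finite_induct)
  case empty
  then show ?case using N_zero[OF assms(1)] ib_zero by simp
next
  case (insert x F')
  then show ?case using N_tri[OF assms(1)] ib_add by (smt (verit) insert_iff sum.insert)
qed

lemma N_upper:
  fixes N :: "real^'c::finite \<Rightarrow> real"
  assumes "is_block_norm blk i N"
  shows "\<exists>C. \<forall>Z. in_block blk i Z \<longrightarrow> N Z \<le> C * norm Z"
proof -
  define C where "C = (\<Sum>c\<in>UNIV. N (block_proj blk i (axis c 1)))"
  have "N Z \<le> C * norm Z" if Z: "in_block blk i Z" for Z
  proof -
    have "Z = (\<Sum>c\<in>UNIV. Z $ c *\<^sub>R axis c 1)"
      by (simp add: vec_eq_iff axis_def if_distrib cong: if_cong)
    hence "Z = block_proj blk i (\<Sum>c\<in>UNIV. Z $ c *\<^sub>R axis c 1)" using bp_id[OF Z] by simp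
    also have "\<dots> = (\<Sum>c\<in>UNIV. Z $ c *\<^sub>R block_proj blk i (axis c 1))"
      by (simp add: bp_sum bp_scale)
    finally have eq: "Z = (\<Sum>c\<in>UNIV. Z $ c *\<^sub>R block_proj blk i (axis c 1))" .
    have "N Z \<le> (\<Sum>c\<in>UNIV. N (Z $ c *\<^sub>R block_proj blk i (axis c 1)))"
      using N_sum[OF assms, of UNIV "\<lambda>c. Z $ c *\<^sub>R block_proj blk i (axis c 1)"] eq
      by (metis bp_in finite ib_scale)
    also have "\<dots> = (\<Sum>c\<in>UNIV. \<bar>Z $ c\<bar> * N (block_proj blk i (axis c 1)))"
      using N_scale[OF assms bp_in] by simp
    also have "\<dots> \<le> (\<Sum>c\<in>UNIV. norm Z * N (block_proj blk i (axis c 1)))"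
      by (intro sum_mono mult_right_mono N_nonneg[OF assms bp_in] component_le_norm_cart[unfolded real_norm_def])
    also have "\<dots> = C * norm Z" by (simp add: C_def sum_distrib_left mult.commute)
    finally show ?thesis .
  qed
  thus ?thesis by blast
qed



lemma closed_block: "closed {Z :: real^'c::finite. in_block blk i Z}"
proof -
  have "{Z :: real^'c. in_block blk i Z} = (\<Inter>c\<in>{c. blk c \<noteq> i}. {Z. Z $ c = 0})"
    by (auto simp: in_block_def)
  moreover have "closed {Z :: real^'c. Z $ c = 0}" for c
    by (intro closed_Collect_eq continuous_intros)
  ultimately show ?thesis by auto
qed

lemma N_lower:
  fixes N :: "real^'c::finite \<Rightarrow> real"
  assumes nb: "is_block_norm blk i N"
  shows "\<exists>m>0. \<forall>Z. in_block blk i Z \<longrightarrow> m * norm Z \<le> N Z"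
proof -
  obtain C where C: "\<forall>Z. in_block blk i Z \<longrightarrow> N Z \<le> C * norm Z" using N_upper[OF nb] by blast
  define S where "S = {Z :: real^'c. in_block blk i Z} \<inter> sphere 0 1"
  show ?thesis
  proof (cases "S = {}")
    case True
    have "Z = 0" if "in_block blk i Z" for Z
    proof (rule ccontr)
      assume "Z \<noteq> 0"
      hence "(1 / norm Z) *\<^sub>R Z \<in> S" using that ib_scale by (auto simp: S_def)
      thus False using True by auto
    qed
    thus ?thesis using N_zero[OF nb] by (intro exI[of _ 1]) (metis mult_1 norm_zero order_refl zero_less_one)
  next
    case False
    have cS: "compact S" unfolding S_def
      by (intro closed_Int_compact closed_block compact_sphere)
    have lip: "\<bar>N Z - N W\<bar> \<le> C * norm (Z - W)" if "in_block blk i Z" "in_block blk i W" for Z W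
    proof -
      have "N Z \<le> N W + N (Z - W)" using N_tri[OF nb, of W "Z - W"] that ib_diff by fastforce
      moreover have "N W \<le> N Z + N (W - Z)" using N_tri[OF nb, of Z "W - Z"] that ib_diff by fastforce
      moreover have "N (W - Z) = N (Z - W)" using N_neg[OF nb, of "Z - W"] that ib_diff[OF that] by simp
      ultimately show ?thesis using C that ib_diff by (smt (verit))
    qed
    have C0: "C \<ge> 0"
    proof -
      obtain Z where "Z \<in> S" using False by blast
      hence "in_block blk i Z" "norm Z = 1" by (auto simp: S_def)
      thus ?thesis using C N_nonneg[OF nb] by (metis mult.right_neutral order_trans)
    qed
    have cont: "continuous_on S N"
      unfolding continuous_on_iff
    proof (intro ballI allI impI)
      fix x e assume x: "x \<in> S" and e: "(0::real) < e"
      show "\<exists>d>0. \<forall>x'\<in>S. dist x' x < d \<longrightarrow> dist (N x') (N x) < e"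
      proof (intro exI[of _ "e / (C + 1)"] conjI ballI impI)
        show "e / (C + 1) > 0" using e C0 by simp
        fix y assume y: "y \<in> S" and d: "dist y x < e / (C + 1)"
        have "dist (N y) (N x) \<le> C * norm (y - x)"
          using lip[of y x] x y by (auto simp: S_def dist_real_def)
        also have "\<dots> \<le> C * (e / (C + 1))" using mult_left_mono[of "norm (y - x)" "e / (C + 1)" C] d C0 by (simp add: dist_norm)
        also have "\<dots> < e" using e C0 by (simp add: field_simps)
        finally show "dist (N y) (N x) < e" .
      qed
    qed
    obtain z where z: "z \<in> S" "\<forall>y\<in>S. N z \<le> N y"
      using continuous_attains_inf[OF cS False cont] by blast
    have zpos: "N z > 0"
      using z(1) N_nonneg[OF nb] N_eq0[OF nb] by (fastforce simp: S_def)
    have "N z * norm Z \<le> N Z" if Z: "in_block blk i Z" for Z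
    proof (cases "Z = 0")
      case True thus ?thesis using N_zero[OF nb] by simp
    next
      case False
      hence "(1 / norm Z) *\<^sub>R Z \<in> S" using Z ib_scale by (auto simp: S_def)
      hence "N z \<le> N ((1 / norm Z) *\<^sub>R Z)" using z by blast
      also have "\<dots> = N Z / norm Z" using N_scale[OF nb Z] by simp
      finally show ?thesis using False by (simp add: field_simps)
    qed
    thus ?thesis using zpos by blast
  qed
qed

lemma dual_bdd:
  fixes N :: "real^'c::finite \<Rightarrow> real"
  assumes nb: "is_block_norm blk i N"
  shows "bdd_above {Y \<bullet> Z | Z. in_block blk i Z \<and> N Z \<le> 1}"
proof -
  obtain m where m: "m > 0" "\<forall>Z. in_block blk i Z \<longrightarrow> m * norm Z \<le> N Z" using N_lower[OF nb] by blast
  have "Y \<bullet> Z \<le> norm Y / m" if "in_block blk i Z" "N Z \<le> 1" for Z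
  proof -
    have "m * norm Z \<le> 1" using m that by (meson order_trans)
    hence "norm Z \<le> 1 / m" using m by (simp add: field_simps mult.commute)
    hence "Y \<bullet> Z \<le> norm Y * (1 / m)"
      by (meson Cauchy_Schwarz_ineq2 abs_le_D1 mult_left_mono norm_ge_zero order_trans)
    thus ?thesis by simp
  qed
  thus ?thesis unfolding bdd_above_def by blast
qed

lemma dual_ge:
  fixes N :: "real^'c::finite \<Rightarrow> real"
  assumes nb: "is_block_norm blk i N" and v: "in_block blk i v"
  shows "Y \<bullet> v \<le> dual_norm blk i N Y * N v"
proof (cases "v = 0")
  case True
  have "0 \<le> dual_norm blk i N Y" unfolding dual_norm_def
    by (rule cSup_upper2[of "Y \<bullet> 0"]) (use dual_bdd[OF nb] ib_zero N_zero[OF nb] in \<open>auto intro!: exI[of _ 0]\<close>)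
  thus ?thesis using True N_zero[OF nb] by simp
next
  case False
  have pos: "N v > 0" using N_nonneg[OF nb v] N_eq0[OF nb v] False by linarith
  have "Y \<bullet> ((1 / N v) *\<^sub>R v) \<le> dual_norm blk i N Y" unfolding dual_norm_def
    by (rule cSup_upper) (use dual_bdd[OF nb] ib_scale[OF v] N_scale[OF nb v] pos in \<open>auto intro!: exI[of _ "(1 / N v) *\<^sub>R v"]\<close>)
  thus ?thesis using pos by (simp add: field_simps)
qed

lemma dual_nonneg:
  fixes N :: "real^'c::finite \<Rightarrow> real"
  assumes nb: "is_block_norm blk i N"
  shows "0 \<le> dual_norm blk i N Y"
  unfolding dual_norm_def
  by (rule cSup_upper2[of "Y \<bullet> 0"]) (use dual_bdd[OF nb] ib_zero N_zero[OF nb] in \<open>auto intro!: exI[of _ 0]\<close>)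

lemma dual_neg:
  fixes N :: "real^'c::finite \<Rightarrow> real"
  assumes nb: "is_block_norm blk i N"
  shows "dual_norm blk i N (- Y) = dual_norm blk i N Y"
proof -
  have "{(- Y) \<bullet> Z | Z. in_block blk i Z \<and> N Z \<le> 1} = {Y \<bullet> Z | Z. in_block blk i Z \<and> N Z \<le> 1}"
  proof safe
    fix Z assume "in_block blk i Z" "N Z \<le> 1"
    thus "\<exists>Z'. - Y \<bullet> Z = Y \<bullet> Z' \<and> in_block blk i Z' \<and> N Z' \<le> 1"
      by (intro exI[of _ "- Z"]) (use N_neg[OF nb] ib_scale[of blk i Z "-1"] in auto)
  next
    fix Z assume "in_block blk i Z" "N Z \<le> 1"
    thus "\<exists>Z'. Y \<bullet> Z = - Y \<bullet> Z' \<and> in_block blk i Z' \<and> N Z' \<le> 1"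
      by (intro exI[of _ "- Z"]) (use N_neg[OF nb] ib_scale[of blk i Z "-1"] in auto)
  qed
  thus ?thesis by (simp add: dual_norm_def)
qed

lemma dual_least:
  fixes N :: "real^'c::finite \<Rightarrow> real"
  assumes "\<And>Z. in_block blk i Z \<Longrightarrow> N Z \<le> 1 \<Longrightarrow> Y \<bullet> Z \<le> b" and nb: "is_block_norm blk i N"
  shows "dual_norm blk i N Y \<le> b"
  unfolding dual_norm_def
  by (rule cSup_least) (use assms ib_zero N_zero[OF nb] in \<open>auto intro!: exI[of _ 0]\<close>)



lemma grad_diff_bound:
  fixes N :: "nat \<Rightarrow> real^'c::finite \<Rightarrow> real"
  assumes blk_range: "\<forall>c. blk c < p"
    and norms: "\<forall>i<p. is_block_norm blk i (N i)"
    and smooth: "layerwise_L0L1_smooth p blk N G L0 L1"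
    and s: "0 \<le> s"
  shows "G (X + s *\<^sub>R v) \<bullet> v - G X \<bullet> v \<le> s * (\<Sum>i<p. (L0 i + L1 i * dual_norm blk i (N i) (block_proj blk i (G X))) * (N i (block_proj blk i v))\<^sup>2)"
proof -
  define Z where "Z = X + s *\<^sub>R v"
  have "G Z \<bullet> v - G X \<bullet> v = (G Z - G X) \<bullet> v" by (simp add: inner_diff_left)
  also have "\<dots> = (\<Sum>i<p. block_proj blk i (G Z - G X) \<bullet> block_proj blk i v)"
    by (rule inner_blocks[OF blk_range])
  also have "\<dots> \<le> (\<Sum>i<p. s * ((L0 i + L1 i * dual_norm blk i (N i) (block_proj blk i (G X))) * (N i (block_proj blk i v))\<^sup>2))"
  proof (rule sum_mono)
    fix i assume "i \<in> {..<p}"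
    hence nb: "is_block_norm blk i (N i)" using norms by auto
    define a where "a = L0 i + L1 i * dual_norm blk i (N i) (block_proj blk i (G X))"
    have Nv: "0 \<le> N i (block_proj blk i v)" using N_nonneg[OF nb bp_in] .
    have "block_proj blk i (G Z - G X) \<bullet> block_proj blk i v
        \<le> dual_norm blk i (N i) (block_proj blk i (G Z - G X)) * N i (block_proj blk i v)"
      by (rule dual_ge[OF nb bp_in])
    also have "dual_norm blk i (N i) (block_proj blk i (G Z - G X))
        = dual_norm blk i (N i) (block_proj blk i (G X) - block_proj blk i (G Z))"
      using dual_neg[OF nb, of "block_proj blk i (G X) - block_proj blk i (G Z)"] by (simp add: bp_diff)
    also have "\<dots> \<le> a * N i (block_proj blk i X - block_proj blk i Z)"
      using smooth \<open>i \<in> {..<p}\<close> unfolding layerwise_L0L1_smooth_def a_def by auto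
    also have "N i (block_proj blk i X - block_proj blk i Z) = s * N i (block_proj blk i v)"
    proof -
      have "block_proj blk i X - block_proj blk i Z = (- s) *\<^sub>R block_proj blk i v"
        by (simp add: Z_def bp_add bp_scale)
      thus ?thesis using N_scale[OF nb bp_in, of "- s"] s by simp
    qed
    finally have "block_proj blk i (G Z - G X) \<bullet> block_proj blk i v \<le> a * (s * N i (block_proj blk i v)) * N i (block_proj blk i v)"
      using Nv mult_right_mono by blast
    thus "block_proj blk i (G Z - G X) \<bullet> block_proj blk i v \<le> s * (a * (N i (block_proj blk i v))\<^sup>2)"
      by (simp add: power2_eq_square algebra_simps)
  qed
  also have "\<dots> = s * (\<Sum>i<p. (L0 i + L1 i * dual_norm blk i (N i) (block_proj blk i (G X))) * (N i (block_proj blk i v))\<^sup>2)"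
    by (simp add: sum_distrib_left)
  finally show ?thesis by (simp add: Z_def)
qed

lemma descent:
  fixes N :: "nat \<Rightarrow> real^'c::finite \<Rightarrow> real"
  assumes blk_range: "\<forall>c. blk c < p"
    and norms: "\<forall>i<p. is_block_norm blk i (N i)"
    and grad: "\<forall>X. (f has_derivative (\<lambda>h. G X \<bullet> h)) (at X)"
    and smooth: "layerwise_L0L1_smooth p blk N G L0 L1"
  shows "f Y \<le> f X + G X \<bullet> (Y - X) + (\<Sum>i<p. (L0 i + L1 i * dual_norm blk i (N i) (block_proj blk i (G X))) * (N i (block_proj blk i (Y - X)))\<^sup>2) / 2"
proof -
  define v where "v = Y - X"
  define Q where "Q = (\<Sum>i<p. (L0 i + L1 i * dual_norm blk i (N i) (block_proj blk i (G X))) * (N i (block_proj blk i v))\<^sup>2)"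
  define \<psi> where "\<psi> s = f (X + s *\<^sub>R v) - s * (G X \<bullet> v) - Q * s\<^sup>2 / 2" for s :: real
  have dphi: "((\<lambda>s. f (X + s *\<^sub>R v)) has_real_derivative (G (X + s *\<^sub>R v) \<bullet> v)) (at s)" for s
  proof -
    have l: "((\<lambda>s. X + s *\<^sub>R v) has_derivative (\<lambda>h. h *\<^sub>R v)) (at s)"
      by (auto intro!: derivative_eq_intros)
    have "((\<lambda>s. f (X + s *\<^sub>R v)) has_derivative (\<lambda>h. G (X + s *\<^sub>R v) \<bullet> (h *\<^sub>R v))) (at s)"
      using has_derivative_compose[OF l grad[rule_format]] .
    thus ?thesis by (rule has_derivative_imp_has_field_derivative) (simp add: mult.commute)
  qed
  have "\<psi> 1 \<le> \<psi> 0"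
  proof (rule DERIV_nonpos_imp_nonincreasing[of 0 1 \<psi>])
    fix s :: real assume "0 \<le> s" "s \<le> 1"
    have "(\<psi> has_real_derivative (G (X + s *\<^sub>R v) \<bullet> v - G X \<bullet> v - Q * s)) (at s)"
      unfolding \<psi>_def
      by (rule derivative_eq_intros dphi refl | simp)+
    moreover have "G (X + s *\<^sub>R v) \<bullet> v - G X \<bullet> v - Q * s \<le> 0"
      using grad_diff_bound[OF blk_range norms smooth \<open>0 \<le> s\<close>, of X v] unfolding Q_def by (simp add: mult.commute)
    ultimately show "\<exists>y. (\<psi> has_real_derivative y) (at s) \<and> y \<le> 0" by blast
  qed simp
  thus ?thesis by (simp add: \<psi>_def v_def Q_def)
qed



lemma dual_zero:
  fixes N :: "real^'c::finite \<Rightarrow> real"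
  assumes nb: "is_block_norm blk i N"
  shows "dual_norm blk i N 0 = 0"
  using dual_least[of blk i N 0 0] nb dual_nonneg[OF nb, of 0] by (simp add: order_antisym)

lemma block_step:
  fixes N :: "real^'c::finite \<Rightarrow> real"
  assumes nb: "is_block_norm blk i N"
    and L0: "0 \<le> L0" and L1: "0 < L1"
    and tdef: "t = (if gb = 0 then 0 else dual_norm blk i N gb / (L0 + L1 * dual_norm blk i N gb))"
    and gb: "in_block blk i gb"
    and xo: "in_block blk i xo" and xn: "in_block blk i xn"
    and step: "N (xn - xo) \<le> t"
    and minz: "\<forall>Z. in_block blk i Z \<longrightarrow> N (Z - xo) \<le> t \<longrightarrow> gb \<bullet> xn \<le> gb \<bullet> Z"
  shows "gb \<bullet> (xn - xo) + (L0 + L1 * dual_norm blk i N gb) * (N (xn - xo))\<^sup>2 / 2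
         \<le> - (dual_norm blk i N gb)\<^sup>2 / (2 * (L0 + L1 * dual_norm blk i N gb))"
proof -
  define g where "g = dual_norm blk i N gb"
  define a where "a = L0 + L1 * g"
  have g0: "0 \<le> g" unfolding g_def by (rule dual_nonneg[OF nb])
  have a0: "0 \<le> a" using L0 L1 g0 by (simp add: a_def)
  have t0: "0 \<le> t" using tdef g0 a0 by (simp add: g_def[symmetric] a_def[symmetric])
  have dv: "in_block blk i (xn - xo)" using ib_diff[OF xn xo] .
  have Nv: "0 \<le> N (xn - xo)" using N_nonneg[OF nb dv] .
  have lin: "gb \<bullet> (xn - xo) \<le> - t * g"
  proof (cases "t = 0")
    case True
    hence "xn - xo = 0" using step Nv N_eq0[OF nb dv] by linarith
    thus ?thesis using True by simp
  next
    case False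
    hence tp: "t > 0" using t0 by simp
    have "g \<le> - (gb \<bullet> (xn - xo)) / t" unfolding g_def
    proof (rule dual_least[OF _ nb])
      fix Z assume Z: "in_block blk i Z" "N Z \<le> 1"
      define W where "W = xo + (- t) *\<^sub>R Z"
      have W: "in_block blk i W" unfolding W_def by (intro ib_add xo ib_scale Z(1))
      have "N (W - xo) = t * N Z" unfolding W_def using N_scale[OF nb Z(1), of "- t"] tp by simp
      also have "\<dots> \<le> t" using Z(2) tp by (simp add: mult_le_cancel_left1)
      finally have "gb \<bullet> xn \<le> gb \<bullet> W" using minz W by blast
      hence "t * (gb \<bullet> Z) \<le> - (gb \<bullet> (xn - xo))"
        by (simp add: W_def inner_add_right inner_diff_right)
      thus "gb \<bullet> Z \<le> - (gb \<bullet> (xn - xo)) / t" using tp by (simp add: field_simps)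
    qed
    thus ?thesis using tp by (simp add: field_simps)
  qed
  have quad: "a * (N (xn - xo))\<^sup>2 \<le> a * t\<^sup>2"
    using a0 step Nv by (intro mult_left_mono power_mono) auto
  have key: "- t * g + a * t\<^sup>2 / 2 \<le> - g\<^sup>2 / (2 * a)"
  proof (cases "gb = 0")
    case True
    hence "g = 0" using dual_zero[OF nb] by (simp add: g_def)
    thus ?thesis using True tdef by simp
  next
    case False
    hence tt: "t = g / a" using tdef by (simp add: g_def a_def)
    show ?thesis
    proof (cases "a = 0")
      case True thus ?thesis using tt by simp
    next
      case False
      thus ?thesis unfolding tt by (simp add: field_simps power2_eq_square)
    qed
  qed
  show ?thesis using lin quad key by (simp add: g_def[symmetric] a_def[symmetric])
qed



lemma tangent:
  fixes L0 L1 g lam :: real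
  assumes "0 \<le> L0" "0 < L1" "0 \<le> g"
  shows "2 * lam * (g / L1) - lam\<^sup>2 * (L0 / L1\<^sup>2 + g / L1) \<le> g\<^sup>2 / (L0 + L1 * g)"
proof (cases "L0 + L1 * g = 0")
  case True
  have "L1 * g \<ge> 0" using assms by simp
  hence "L0 = 0" "L1 * g = 0" using True assms by linarith+
  hence "g = 0" "L0 = 0" using assms by auto
  thus ?thesis by simp
next
  case False
  define a where "a = L0 + L1 * g"
  define q where "q = lam / L1"
  have "L1 * g \<ge> 0" using assms by simp
  hence a: "a > 0" using False assms unfolding a_def by linarith
  have e: "L0 / L1\<^sup>2 + g / L1 = a / L1\<^sup>2" using assms
    unfolding a_def by (simp add: add_divide_distrib power2_eq_square)
  have l: "2 * lam * (g / L1) - lam\<^sup>2 * (L0 / L1\<^sup>2 + g / L1) = 2 * q * g - q\<^sup>2 * a"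
    unfolding e q_def by (simp add: power2_eq_square)
  have "0 \<le> (g - q * a)\<^sup>2 / a" using a by simp
  also have "(g - q * a)\<^sup>2 / a = g\<^sup>2 / a - (2 * q * g - q\<^sup>2 * a)"
    using a by (simp add: power2_eq_square diff_divide_distrib add_divide_distrib algebra_simps)
  finally show ?thesis using l by (simp add: a_def)
qed

lemma final_arith:
  fixes U h C :: real
  assumes "0 < h" "h < U" "0 \<le> C"
  shows "h\<^sup>2 / (C + h) < 2 * (h / (C + h)) * U - (h / (C + h))\<^sup>2 * (C + U)"
proof -
  define lam where "lam = h / (C + h)"
  have l0: "0 < lam" "lam \<le> 1" using assms unfolding lam_def by (simp_all add: divide_pos_pos divide_le_eq_1)
  have lc: "lam * (C + h) = h" using assms by (simp add: lam_def)
  have lC: "lam\<^sup>2 * (C + U) = lam * (h - lam * h) + lam\<^sup>2 * U"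
  proof -
    have a: "lam * C = h - lam * h" using lc by (simp add: distrib_left)
    have "lam\<^sup>2 * (C + U) = lam * (lam * C) + lam\<^sup>2 * U" by (simp add: power2_eq_square algebra_simps)
    thus ?thesis using a by simp
  qed
  have "2 * lam * U - lam\<^sup>2 * (C + U) - lam * h = lam * (2 - lam) * (U - h)"
    unfolding lC by (simp add: power2_eq_square algebra_simps)
  moreover have "lam * (2 - lam) * (U - h) > 0" using l0 assms by (intro mult_pos_pos) auto
  moreover have "lam * h = h\<^sup>2 / (C + h)" using assms by (simp add: lam_def power2_eq_square)
  ultimately show ?thesis unfolding lam_def[symmetric] by linarith
qed



lemma aux_lin: "(a::real) \<le> 2 * d \<Longrightarrow> q < a \<Longrightarrow> B = q / 2 \<Longrightarrow> B < d"
  by linarith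

theorem theorem1:
  fixes p :: nat and blk :: "'c::finite \<Rightarrow> nat"
    and N :: "nat \<Rightarrow> real^'c \<Rightarrow> real"
    and f :: "real^'c \<Rightarrow> real" and G :: "real^'c \<Rightarrow> real^'c"
    and L0 L1 :: "nat \<Rightarrow> real" and \<epsilon> :: real
    and Xs :: "nat \<Rightarrow> real^'c"
    and t :: "nat \<Rightarrow> nat \<Rightarrow> real" and H :: real and K :: int
  assumes blk_range: "\<forall>c. blk c < p"
    and blk_nonempty: "\<forall>i<p. \<exists>c. blk c = i"
    and norms: "\<forall>i<p. is_block_norm blk i (N i)"
    and grad: "\<forall>X. (f has_derivative (\<lambda>h. G X \<bullet> h)) (at X)"
    and grad_cont: "continuous_on UNIV G"
    and bdd: "bdd_below (range f)"
    and L0_nonneg: "\<forall>i<p. 0 \<le> L0 i"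
    and L1_pos: "\<forall>i<p. 0 < L1 i"
    and smooth: "layerwise_L0L1_smooth p blk N G L0 L1"
    and eps: "\<epsilon> > 0"
    and t_def: "\<forall>k i. t i k =
        (if block_proj blk i (G (Xs k)) = 0 then 0
         else dual_norm blk i (N i) (block_proj blk i (G (Xs k)))
              / (L0 i + L1 i * dual_norm blk i (N i) (block_proj blk i (G (Xs k)))))"
    and gluon: "gluon_iterates p blk N G t Xs"
    and H_def: "H = (1 / real p) * (\<Sum>j<p. 1 / L1 j)"
    and K_def: "K = \<lceil>2 * (f (Xs 0) - Inf (range f)) * (\<Sum>i<p. L0 i / (L1 i)\<^sup>2) / (\<epsilon>\<^sup>2 * H\<^sup>2)
                   + 2 * (f (Xs 0) - Inf (range f)) / (\<epsilon> * H)\<rceil>"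
    and K_pos: "K \<ge> 1"
  shows "Min ((\<lambda>k. \<Sum>i<p. ((1 / L1 i) / H) * dual_norm blk i (N i) (block_proj blk i (G (Xs k))))
              ` {0..<nat K}) \<le> \<epsilon>"
proof -
  define g where "g k i = dual_norm blk i (N i) (block_proj blk i (G (Xs k)))" for k i
  define D where "D k = (\<Sum>i<p. (g k i)\<^sup>2 / (2 * (L0 i + L1 i * g k i)))" for k
  define \<Delta> where "\<Delta> = f (Xs 0) - Inf (range f)"
  define C where "C = (\<Sum>i<p. L0 i / (L1 i)\<^sup>2)"
  have g0: "0 \<le> g k i" if "i < p" for k i
    unfolding g_def using dual_nonneg norms that by blast
  have step: "f (Xs (Suc k)) \<le> f (Xs k) - D k" for k
  proof -
    let ?X = "Xs k" and ?Y = "Xs (Suc k)"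
    let ?a = "\<lambda>i. L0 i + L1 i * g k i"
    have "f ?Y \<le> f ?X + G ?X \<bullet> (?Y - ?X) + (\<Sum>i<p. ?a i * (N i (block_proj blk i (?Y - ?X)))\<^sup>2) / 2"
      using descent[OF blk_range norms grad smooth, of ?Y ?X] by (simp add: g_def)
    also have "G ?X \<bullet> (?Y - ?X) = (\<Sum>i<p. block_proj blk i (G ?X) \<bullet> block_proj blk i (?Y - ?X))"
      by (rule inner_blocks[OF blk_range])
    finally have "f ?Y \<le> f ?X + (\<Sum>i<p. block_proj blk i (G ?X) \<bullet> block_proj blk i (?Y - ?X)
                    + ?a i * (N i (block_proj blk i (?Y - ?X)))\<^sup>2 / 2)"
      by (simp add: sum.distrib sum_divide_distrib)
    also have "\<dots> \<le> f ?X + (\<Sum>i<p. - (g k i)\<^sup>2 / (2 * ?a i))"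
    proof (intro add_left_mono sum_mono)
      fix i assume "i \<in> {..<p}"
      hence i: "i < p" by simp
      show "block_proj blk i (G ?X) \<bullet> block_proj blk i (?Y - ?X)
                    + ?a i * (N i (block_proj blk i (?Y - ?X)))\<^sup>2 / 2 \<le> - (g k i)\<^sup>2 / (2 * ?a i)"
        unfolding g_def bp_diff
        by (rule block_step[where t = "t i k"])
           (use norms L0_nonneg L1_pos t_def gluon i bp_in in \<open>auto simp: gluon_iterates_def\<close>)
    qed
    also have "\<dots> = f ?X - D k" by (simp add: D_def sum_negf)
    finally show ?thesis .
  qed
  have tel: "f (Xs n) \<le> f (Xs 0) - (\<Sum>k<n. D k)" for n
  proof (induction n)
    case (Suc n) thus ?case using step[of n] by simp
  qed simp
  have "Inf (range f) \<le> f (Xs (nat K))" by (rule cInf_lower[OF _ bdd]) simp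
  hence sumD: "(\<Sum>k<nat K. D k) \<le> \<Delta>" using tel[of "nat K"] by (simp add: \<Delta>_def)
  have p0: "p > 0" using blk_range by (metis gr_zeroI not_less0)
  have "(\<Sum>j<p. 1 / L1 j) > 0" by (rule sum_pos) (use p0 L1_pos in auto)
  hence H0: "H > 0" unfolding H_def using p0 by simp
  have C0: "C \<ge> 0" unfolding C_def using L0_nonneg L1_pos by (auto intro!: sum_nonneg)
  define h where "h = \<epsilon> * H"
  have h0: "h > 0" using eps H0 by (simp add: h_def)
  define B where "B = h\<^sup>2 / (2 * (C + h))"
  have Dlow: "D k > B" if S: "(\<Sum>i<p. ((1 / L1 i) / H) * g k i) > \<epsilon>" for k
  proof -
    define U where "U = (\<Sum>i<p. g k i / L1 i)"
    have "(\<Sum>i<p. ((1 / L1 i) / H) * g k i) = U / H"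
      by (simp add: U_def sum_divide_distrib)
    hence "\<epsilon> < U / H" using S by simp
    hence "\<epsilon> * H < U" using H0 by (simp add: pos_less_divide_eq)
    hence "h < U" by (simp add: h_def)
    define lam where "lam = h / (C + h)"
    have "2 * lam * U - lam\<^sup>2 * (C + U) = (\<Sum>i<p. 2 * lam * (g k i / L1 i) - lam\<^sup>2 * (L0 i / (L1 i)\<^sup>2 + g k i / L1 i))"
      by (simp add: U_def C_def sum_subtractf sum_distrib_left sum.distrib algebra_simps)
    also have "\<dots> \<le> (\<Sum>i<p. (g k i)\<^sup>2 / (L0 i + L1 i * g k i))"
      by (rule sum_mono, rule tangent) (use L0_nonneg L1_pos g0 in auto)
    also have "\<dots> = 2 * D k"
    proof -
      have tw: "2 * (x / (2 * y)) = x / y" for x y :: real by (cases "y = 0") (simp_all add: field_simps)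
      show ?thesis by (simp only: D_def sum_distrib_left tw)
    qed
    finally have "2 * lam * U - lam\<^sup>2 * (C + U) \<le> 2 * D k" .
    moreover have "h\<^sup>2 / (C + h) < 2 * lam * U - lam\<^sup>2 * (C + U)"
      unfolding lam_def by (rule final_arith[OF h0 \<open>h < U\<close> C0])
    moreover have "B = (h\<^sup>2 / (C + h)) / 2" by (simp add: B_def)
    ultimately show ?thesis by (rule aux_lin)
  qed
  show ?thesis
  proof (rule ccontr)
    assume "\<not> ?thesis"
    hence all: "\<forall>k\<in>{0..<nat K}. (\<Sum>i<p. ((1 / L1 i) / H) * g k i) > \<epsilon>"
      using K_pos by (subst (asm) Min_le_iff) (auto simp: g_def)
    have "(\<Sum>k<nat K. B) < (\<Sum>k<nat K. D k)"
      by (rule sum_strict_mono) (use K_pos all Dlow in \<open>auto simp: lessThan_empty_iff\<close>)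
    hence "real (nat K) * B < \<Delta>" using sumD by simp
    moreover have "real_of_int K \<ge> 2 * \<Delta> * C / (\<epsilon>\<^sup>2 * H\<^sup>2) + 2 * \<Delta> / (\<epsilon> * H)"
      unfolding K_def \<Delta>_def C_def by (rule le_of_int_ceiling)
    moreover have "2 * \<Delta> * C / (\<epsilon>\<^sup>2 * H\<^sup>2) + 2 * \<Delta> / (\<epsilon> * H) = \<Delta> / B"
      using h0 C0 H0 eps by (simp add: B_def h_def field_simps power2_eq_square)
    moreover have "real (nat K) = real_of_int K" using K_pos by simp
    moreover have "B > 0" using h0 C0 by (simp add: B_def)
    ultimately have "\<Delta> / B \<le> real_of_int K" "real_of_int K * B < \<Delta>" "B > 0" by auto
    hence "\<Delta> \<le> real_of_int K * B" "real_of_int K * B < \<Delta>" by (simp_all add: pos_divide_le_eq)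
    thus False by linarith
  qed
qed

end
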